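(* Let $\lambda>0$ and let $(\alpha_n)_{n\geq 0}$ be a sequence with $0<\alpha_n\leq 1$. Consider the system of difference-differential equations (governing the state probabilities of the state dependent time fractional Poisson process-I) $$\partial_t^{\alpha_n} p^{\alpha_n}(n,t)=-\lambda\big(p^{\alpha_n}(n,t)-p^{\alpha_{n-1}}(n-1,t)\big),\qquad n\geq 0,\ t\geq 0,$$ with $p^{\alpha_{-1}}(-1,t)=0$ for $t\geq0$, and initial conditions $p^{\alpha_0}(0,0)=1$ and $p^{\alpha_n}(n,0)=0$ for $n\geq 1$. The solution of this system is given by $$p^{\alpha_n}(n,t)=(-1)^n\sum_{k=n}^{\infty}(-\lambda)^k\sum_{\Theta^k_n}\frac{t^{\sum_{j=0}^nk_j\alpha_j}}{\Gamma\big(1+\sum_{j=0}^nk_j\alpha_j\big)},\qquad n\geq0,$$ where $\Theta^k_n=\{(k_0,k_1,\ldots,k_n):\ \sum_{j=0}^nk_j=k,\ k_0\in\mathbb{N}_0,\ k_j\in\mathbb{N}_0\setminus\{0\} \text{ for } 1\leq j\leq n\}$.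
   Context: $\mathbb{N}_0$ denotes the set of nonnegative integers. For $0<\alpha<1$, $\partial_t^{\alpha}$ denotes the Caputo fractional derivative $\partial_t^{\alpha}f(t)=\frac{1}{\Gamma(1-\alpha)}\int_0^t (t-s)^{-\alpha}f'(s)\,\mathrm{d}s$, and for $\alpha=1$, $\partial_t^{1}f(t)=f'(t)$. *)

theory Defs
  imports "HOL-Analysis.Analysis"
begin

text \<open>Power t^x for t \<ge> 0 with the convention t^0 = 1 (also at t = 0);
  Isabelle's powr has 0 powr 0 = 0, which would be wrong for the k = 0 term.\<close>
definition tpow :: "real \<Rightarrow> real \<Rightarrow> real" where
  "tpow t x = (if x = 0 then 1 else t powr x)"

definition caputo :: "real \<Rightarrow> (real \<Rightarrow> real) \<Rightarrow> real \<Rightarrow> real" where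
  "caputo a f t = (if a = 1 then deriv f t
     else (1 / Gamma (1 - a)) * integral {0..t} (\<lambda>s. (t - s) powr (- a) * deriv f s))"

definition caputo_defined :: "real \<Rightarrow> (real \<Rightarrow> real) \<Rightarrow> real \<Rightarrow> bool" where
  "caputo_defined a f t = (if a = 1 then f differentiable (at t)
     else (\<forall>s\<in>{0<..<t}. f differentiable (at s)) \<and>
          (\<lambda>s. (t - s) powr (- a) * deriv f s) integrable_on {0..t})"

definition Theta :: "nat \<Rightarrow> nat \<Rightarrow> (nat \<Rightarrow> nat) set" where
  "Theta k n = {ks. (\<forall>j>n. ks j = 0) \<and> (\<Sum>j\<le>n. ks j) = k \<and> (\<forall>j\<in>{1..n}. ks j \<ge> 1)}"

definition sdfpp_term :: "real \<Rightarrow> (nat \<Rightarrow> real) \<Rightarrow> nat \<Rightarrow> real \<Rightarrow> nat \<Rightarrow> real" where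
  "sdfpp_term lam \<alpha> n t k = (- lam) ^ k *
     (\<Sum>ks\<in>Theta k n. tpow t (\<Sum>j\<le>n. real (ks j) * \<alpha> j) / Gamma (1 + (\<Sum>j\<le>n. real (ks j) * \<alpha> j)))"

text \<open>Sum over k \<ge> n; terms with k < n vanish since Theta k n is then empty.\<close>
definition sdfpp :: "real \<Rightarrow> (nat \<Rightarrow> real) \<Rightarrow> nat \<Rightarrow> real \<Rightarrow> real" where
  "sdfpp lam \<alpha> n t = (-1) ^ n * (\<Sum>k. sdfpp_term lam \<alpha> n t (k + n))"

end

theory Submission
  imports Defs
begin

definition Bs :: "(nat \<Rightarrow> real) \<Rightarrow> nat \<Rightarrow> (nat \<Rightarrow> nat) \<Rightarrow> real" where
  "Bs \<alpha> n ks = (\<Sum>j\<le>n. real (ks j) * \<alpha> j)"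

lemma Theta_inj: "inj_on (\<lambda>ks. restrict ks {..n}) (Theta k n)"
proof (rule inj_onI)
  fix x y assume x: "x \<in> Theta k n" and y: "y \<in> Theta k n" and e: "restrict x {..n} = restrict y {..n}"
  show "x = y"
  proof
    fix j show "x j = y j"
    proof (cases "j \<le> n")
      case True then show ?thesis using fun_cong[OF e, of j] by simp
    next
      case False then show ?thesis using x y by (simp add: Theta_def)
    qed
  qed
qed

lemma Theta_sub: "(\<lambda>ks. restrict ks {..n}) ` Theta k n \<subseteq> PiE {..n} (\<lambda>_. {..k})"
proof
  fix f assume "f \<in> (\<lambda>ks. restrict ks {..n}) ` Theta k n"
  then obtain ks where ks: "ks \<in> Theta k n" and f: "f = restrict ks {..n}" by blast
  have "ks j \<le> k" if "j \<le> n" for j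
  proof -
    have "ks j \<le> (\<Sum>i\<le>n. ks i)" using that by (intro member_le_sum) auto
    then show ?thesis using ks by (simp add: Theta_def)
  qed
  then show "f \<in> PiE {..n} (\<lambda>_. {..k})" using f by auto
qed

lemma finite_Theta: "finite (Theta k n)"
proof -
  have "finite ((\<lambda>ks. restrict ks {..n}) ` Theta k n)"
    by (rule finite_subset[OF Theta_sub]) (auto intro: finite_PiE)
  then show ?thesis using Theta_inj finite_imageD by blast
qed

lemma card_Theta: "card (Theta k n) \<le> (k+1)^(n+1)"
proof -
  have "card (Theta k n) = card ((\<lambda>ks. restrict ks {..n}) ` Theta k n)"
    using Theta_inj by (simp add: card_image)
  also have "\<dots> \<le> card (PiE {..n} (\<lambda>_. {..k::nat}))"
    by (rule card_mono[OF _ Theta_sub]) (auto intro: finite_PiE)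
  also have "\<dots> = (k+1)^(n+1)" by (simp add: card_PiE)
  finally show ?thesis .
qed

lemma card_Theta2: "real (card (Theta k n)) \<le> (2^(n+1))^k"
proof -
  have "k + 1 \<le> 2^k" by (induction k) auto
  then have "(k+1)^(n+1) \<le> (2^k)^(n+1)" by (rule power_mono) simp
  also have "\<dots> = (2^(n+1))^k" by (simp add: power_mult[symmetric] mult.commute)
  finally have "card (Theta k n) \<le> (2^(n+1))^k" using card_Theta order_trans by blast
  then show ?thesis by (metis of_nat_le_iff of_nat_numeral of_nat_power)
qed

lemma Theta_ge: assumes "ks \<in> Theta k n" shows "n \<le> k"
proof -
  have "n = (\<Sum>j\<in>{1..n}. 1::nat)" by simp
  also have "\<dots> \<le> (\<Sum>j\<in>{1..n}. ks j)" using assms by (intro sum_mono) (auto simp: Theta_def)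
  also have "\<dots> \<le> (\<Sum>j\<le>n. ks j)" by (intro sum_mono2) auto
  finally show ?thesis using assms by (simp add: Theta_def)
qed

lemma Theta_sum_real: "ks \<in> Theta k n \<Longrightarrow> (\<Sum>j\<le>n. real (ks j)) = real k"
  unfolding Theta_def by (simp flip: of_nat_sum)

lemma Theta_empty: "k < n \<Longrightarrow> Theta k n = {}"
  using Theta_ge by force

context
  fixes \<alpha> :: "nat \<Rightarrow> real" and n :: nat
  assumes \<alpha>: "\<And>j. 0 < \<alpha> j \<and> \<alpha> j \<le> 1"
begin

definition cm where "cm = Min (\<alpha> ` {..n})"

lemma cm_pos: "cm > 0"
  unfolding cm_def using \<alpha> by (subst Min_gr_iff) auto

lemma cm_le: "j \<le> n \<Longrightarrow> cm \<le> \<alpha> j"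
  unfolding cm_def by (intro Min_le) auto

lemma Bs_lower: assumes "ks \<in> Theta k n" shows "cm * real k \<le> Bs \<alpha> n ks"
proof -
  have "cm * real k = cm * (\<Sum>j\<le>n. real (ks j))"
    using Theta_sum_real[OF assms] by simp
  also have "\<dots> = (\<Sum>j\<le>n. real (ks j) * cm)"
    by (simp add: sum_distrib_left mult.commute)
  also have "\<dots> \<le> Bs \<alpha> n ks" unfolding Bs_def
    by (intro sum_mono mult_left_mono cm_le) auto
  finally show ?thesis .
qed

lemma Bs_upper: assumes "ks \<in> Theta k n" shows "Bs \<alpha> n ks \<le> real k"
proof -
  have "Bs \<alpha> n ks \<le> (\<Sum>j\<le>n. real (ks j) * 1)" unfolding Bs_def
    using \<alpha> by (intro sum_mono mult_left_mono) auto
  also have "\<dots> = real k" using Theta_sum_real[OF assms] by simp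
  finally show ?thesis .
qed

lemma Bs_nonneg: "0 \<le> Bs \<alpha> n ks"
  unfolding Bs_def using \<alpha> by (intro sum_nonneg mult_nonneg_nonneg) (auto intro: less_imp_le)

lemma Bs_zero: assumes "ks \<in> Theta k n" shows "Bs \<alpha> n ks = 0 \<longleftrightarrow> k = 0"
proof
  assume "Bs \<alpha> n ks = 0"
  then have "cm * real k \<le> 0" using Bs_lower[OF assms] by simp
  then show "k = 0" using cm_pos by (simp add: mult_le_0_iff)
next
  assume "k = 0" then show "Bs \<alpha> n ks = 0" using Bs_upper[OF assms] Bs_nonneg[of ks] by simp
qed

end

lemma Gamma_lower:
  fixes x R :: real
  assumes x: "x \<ge> 0" and R: "R > 0"
  shows "R powr x / exp (R+1) \<le> Gamma (1 + x)"
proof -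
  define f where "f t = t powr x / exp t" for t :: real
  have G: "(f has_integral Gamma (1+x)) {0..}"
    using Gamma_integral_real[of "1+x"] x unfolding f_def[abs_def] by simp
  have cont: "continuous_on {R..R+1} f" unfolding f_def using R
    by (intro continuous_intros) auto
  have i1: "f integrable_on {R..R+1}" by (rule integrable_continuous_interval[OF cont])
  have "R powr x / exp (R+1) = integral {R..R+1} (\<lambda>t. R powr x / exp (R+1))" by simp
  also have "\<dots> \<le> integral {R..R+1} f"
  proof (rule integral_le[OF _ i1])
    show "(\<lambda>t. R powr x / exp (R+1)) integrable_on {R..R+1}"
      by (rule integrable_continuous_interval) (intro continuous_intros)
    fix t assume t: "t \<in> {R..R+1}"
    have "R powr x \<le> t powr x" using t R x by (intro powr_mono2) auto
    moreover have "exp t \<le> exp (R+1)" using t by simp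
    ultimately show "R powr x / exp (R+1) \<le> f t" unfolding f_def
      by (intro frac_le) auto
  qed
  also have "\<dots> \<le> integral {0..} f"
    using G i1 R by (intro integral_subset_le) (auto simp: f_def)
  also have "\<dots> = Gamma (1+x)" using G by (simp add: integral_unique)
  finally show ?thesis .
qed

definition phi :: "real \<Rightarrow> real \<Rightarrow> real" where
  "phi t b = tpow t b / Gamma (1 + b)"
definition psi :: "real \<Rightarrow> real \<Rightarrow> real" where
  "psi t b = (if b = 0 then 0 else t powr (b - 1) / Gamma b)"
definition chi :: "real \<Rightarrow> real \<Rightarrow> real \<Rightarrow> real" where
  "chi a t b = (if b = 0 then 0 else t powr (b - a) / Gamma (1 + b - a))"

lemma phi_nonneg: "b \<ge> 0 \<Longrightarrow> phi t b \<ge> 0"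
  unfolding phi_def tpow_def by (auto intro!: divide_nonneg_pos)

lemma psi_nonneg: "b \<ge> 0 \<Longrightarrow> psi t b \<ge> 0"
  unfolding psi_def by (auto intro!: divide_nonneg_pos)

lemma chi_nonneg: "b \<ge> a \<Longrightarrow> chi a t b \<ge> 0"
  unfolding chi_def by (auto intro!: divide_nonneg_pos)

lemma phi_bound:
  assumes "0 \<le> s" "s \<le> T" "0 < T" "T \<le> R" "b \<ge> 0"
  shows "phi s b \<le> exp (R+1) * (T/R) powr b"
proof (cases "b = 0")
  case True then show ?thesis using assms by (simp add: phi_def tpow_def)
next
  case False
  have R: "R > 0" using assms by simp
  have G: "R powr b / exp (R+1) \<le> Gamma (1+b)" using Gamma_lower[OF assms(5) R] .
  have Rb: "R powr b > 0" using R by simp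
  have "phi s b = s powr b / Gamma (1+b)" using False by (simp add: phi_def tpow_def)
  also have "\<dots> \<le> T powr b / (R powr b / exp (R+1))"
    using assms Rb by (intro frac_le powr_mono2 G) auto
  also have "\<dots> = exp (R+1) * (T/R) powr b" using assms by (simp add: powr_divide)
  finally show ?thesis .
qed

lemma psi_eq: "b > 0 \<Longrightarrow> s > 0 \<Longrightarrow> psi s b = b / s * phi s b"
proof -
  assume b: "b > 0" and s: "s > 0"
  have g: "Gamma (1 + b) = b * Gamma b" using Gamma_plus1[of b] b
    by (simp add: add.commute nonpos_Ints_def)
  show ?thesis unfolding psi_def phi_def tpow_def using b s g
    by (simp add: powr_diff field_simps)
qed

context
  fixes lam :: real and \<alpha> :: "nat \<Rightarrow> real" and n :: nat
  assumes lam: "lam > 0" and \<alpha>: "\<And>j. 0 < \<alpha> j \<and> \<alpha> j \<le> 1"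
begin

lemma cmp: "cm \<alpha> n > 0" using cm_pos[of \<alpha> n] \<alpha> by blast
lemma Bs_lower': "ks \<in> Theta k n \<Longrightarrow> cm \<alpha> n * real k \<le> Bs \<alpha> n ks"
  using Bs_lower[of \<alpha> ks k n] \<alpha> by blast
lemma Bs_upper': "ks \<in> Theta k n \<Longrightarrow> Bs \<alpha> n ks \<le> real k"
  using Bs_upper[of \<alpha> ks k n] \<alpha> by blast
lemma Bs_nonneg': "0 \<le> Bs \<alpha> n ks"
  using Bs_nonneg[of \<alpha> n ks] \<alpha> by blast
lemma Bs_zero': "ks \<in> Theta k n \<Longrightarrow> Bs \<alpha> n ks = 0 \<longleftrightarrow> k = 0"
  using Bs_zero[of \<alpha> ks k n] \<alpha> by blast

definition LL where "LL = lam * 2^(n+2)"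
definition RR where "RR T = T * (2 * LL + 1) powr (1 / cm \<alpha> n)"

lemma LL_pos: "LL > 0" unfolding LL_def using lam by simp

lemma RR_ge: "T > 0 \<Longrightarrow> T \<le> RR T"
proof -
  assume T: "T > 0"
  have "1 \<le> (2 * LL + 1) powr (1 / cm \<alpha> n)"
    using LL_pos cmp by (intro ge_one_powr_ge_zero) auto
  then show ?thesis unfolding RR_def using T by simp
qed

lemma RR_pos: "T > 0 \<Longrightarrow> RR T > 0" using RR_ge by force

lemma q_eq: assumes T: "T > 0" shows "(T / RR T) powr cm \<alpha> n = 1 / (2 * LL + 1)"
proof -
  have c: "cm \<alpha> n > 0" by (rule cmp)
  have X: "2 * LL + 1 > 0" using LL_pos by simp
  have "T / RR T = 1 / (2 * LL + 1) powr (1 / cm \<alpha> n)" unfolding RR_def using T by simp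
  then have "(T / RR T) powr cm \<alpha> n = 1 / ((2 * LL + 1) powr (1 / cm \<alpha> n)) powr cm \<alpha> n"
    by (simp add: powr_divide)
  also have "\<dots> = 1 / (2 * LL + 1)" using c X by (simp add: powr_powr)
  finally show ?thesis .
qed

lemma geo_bound:
  assumes T: "T > 0" and K: "K \<ge> 0"
    and g: "\<And>ks. ks \<in> Theta k n \<Longrightarrow> 0 \<le> g ks \<and> g ks \<le> K * (real k + 1) * (T / RR T) powr (cm \<alpha> n * real k)"
  shows "lam^k * (\<Sum>ks\<in>Theta k n. g ks) \<le> K * (1/2)^k"
proof -
  define q where "q = 1 / (2 * LL + 1)"
  have q: "q > 0" unfolding q_def using LL_pos by simp
  have pw: "(T / RR T) powr (cm \<alpha> n * real k) = q^k"
  proof -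
    have "(T / RR T) powr (cm \<alpha> n * real k) = ((T / RR T) powr cm \<alpha> n) powr real k"
      by (simp add: powr_powr)
    also have "\<dots> = q^k" using q_eq[OF T] q by (simp add: q_def powr_realpow)
    finally show ?thesis .
  qed
  have k1: "real k + 1 \<le> 2^k"
  proof -
    have "k + 1 \<le> 2^k" by (induction k) auto
    then show ?thesis by (metis of_nat_1 of_nat_add of_nat_le_iff of_nat_numeral of_nat_power)
  qed
  have "(\<Sum>ks\<in>Theta k n. g ks) \<le> (\<Sum>ks\<in>Theta k n. K * (real k + 1) * q^k)"
    using g pw by (intro sum_mono) auto
  also have "\<dots> = real (card (Theta k n)) * (K * (real k + 1) * q^k)" by simp
  also have "\<dots> \<le> (2^(n+1))^k * (K * 2^k * q^k)"
    using card_Theta2 K q k1 by (intro mult_mono mult_left_mono mult_right_mono) auto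
  also have "\<dots> = K * (((2::real)^(n+1))^k * 2^k * q^k)" by (simp add: mult_ac)
  also have "\<dots> = K * (2^(n+1) * 2 * q)^k" by (simp only: power_mult_distrib)
  finally have "(\<Sum>ks\<in>Theta k n. g ks) \<le> K * (2^(n+1) * 2 * q)^k" .
  moreover have "(2::real)^(n+1) * 2 = 2^(n+2)" by simp
  ultimately have "(\<Sum>ks\<in>Theta k n. g ks) \<le> K * (2^(n+2) * q)^k" by simp
  then have "lam^k * (\<Sum>ks\<in>Theta k n. g ks) \<le> lam^k * (K * (2^(n+2) * q)^k)"
    using lam by (intro mult_left_mono) auto
  also have "\<dots> = K * (LL * q)^k" by (simp add: LL_def power_mult_distrib mult_ac)
  also have "\<dots> \<le> K * (1/2)^k"
  proof -
    have "LL * q \<le> 1/2" unfolding q_def using LL_pos by (simp add: field_simps)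
    then show ?thesis using K LL_pos q by (intro mult_left_mono power_mono) auto
  qed
  finally show ?thesis .
qed

lemma pw_mono:
  assumes T: "T > 0" and ks: "ks \<in> Theta k n" and d: "d \<le> Bs \<alpha> n ks"
    and "0 \<le> s" "s \<le> T"
  shows "(T / RR T) powr d \<le> (T / RR T) powr (cm \<alpha> n * real k - (cm \<alpha> n * real k - d))"
  by simp

lemma phi_sum_bound:
  assumes T: "T > 0" and s: "0 \<le> s" "s \<le> T"
  shows "lam^k * (\<Sum>ks\<in>Theta k n. phi s (Bs \<alpha> n ks)) \<le> exp (RR T + 1) * (1/2)^k"
proof (rule geo_bound[OF T])
  fix ks assume ks: "ks \<in> Theta k n"
  have b0: "Bs \<alpha> n ks \<ge> 0" by (rule Bs_nonneg')
  have TR: "T / RR T \<le> 1" "T / RR T \<ge> 0" using RR_ge[OF T] RR_pos[OF T] T by auto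
  have "phi s (Bs \<alpha> n ks) \<le> exp (RR T + 1) * (T / RR T) powr (Bs \<alpha> n ks)"
    using phi_bound[OF s T RR_ge[OF T] b0] .
  also have "\<dots> \<le> exp (RR T + 1) * (T / RR T) powr (cm \<alpha> n * real k)"
    using Bs_lower'[OF ks] TR by (intro mult_left_mono powr_mono') auto
  also have "\<dots> \<le> exp (RR T + 1) * (real k + 1) * (T / RR T) powr (cm \<alpha> n * real k)"
    by (simp add: mult_right_mono)
  finally show "0 \<le> phi s (Bs \<alpha> n ks) \<and> phi s (Bs \<alpha> n ks) \<le> exp (RR T + 1) * (real k + 1) * (T / RR T) powr (cm \<alpha> n * real k)"
    using phi_nonneg[OF b0] by simp
qed simp

lemma psi_sum_bound:
  assumes T: "T > 0" and s: "0 < \<delta>" "\<delta> \<le> s" "s \<le> T"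
  shows "lam^k * (\<Sum>ks\<in>Theta k n. psi s (Bs \<alpha> n ks)) \<le> exp (RR T + 1) / \<delta> * (1/2)^k"
proof (rule geo_bound[OF T])
  fix ks assume ks: "ks \<in> Theta k n"
  have b0: "Bs \<alpha> n ks \<ge> 0" by (rule Bs_nonneg')
  have TR: "T / RR T \<le> 1" "T / RR T \<ge> 0" using RR_ge[OF T] RR_pos[OF T] T by auto
  have ph: "phi s (Bs \<alpha> n ks) \<le> exp (RR T + 1) * (T / RR T) powr (cm \<alpha> n * real k)"
  proof -
    have "phi s (Bs \<alpha> n ks) \<le> exp (RR T + 1) * (T / RR T) powr (Bs \<alpha> n ks)"
      using phi_bound[of s T "RR T"] s T RR_ge[OF T] b0 by auto
    also have "\<dots> \<le> exp (RR T + 1) * (T / RR T) powr (cm \<alpha> n * real k)"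
      using Bs_lower'[OF ks] TR by (intro mult_left_mono powr_mono') auto
    finally show ?thesis .
  qed
  have "psi s (Bs \<alpha> n ks) \<le> exp (RR T + 1) / \<delta> * (real k + 1) * (T / RR T) powr (cm \<alpha> n * real k)"
  proof (cases "Bs \<alpha> n ks = 0")
    case True then show ?thesis using s by (simp add: psi_def)
  next
    case False
    then have bp: "Bs \<alpha> n ks > 0" using b0 by simp
    have "psi s (Bs \<alpha> n ks) = Bs \<alpha> n ks / s * phi s (Bs \<alpha> n ks)"
      using psi_eq[OF bp] s by simp
    also have "\<dots> \<le> (real k + 1) / \<delta> * (exp (RR T + 1) * (T / RR T) powr (cm \<alpha> n * real k))"
    proof (intro mult_mono ph)
      show "Bs \<alpha> n ks / s \<le> (real k + 1) / \<delta>"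
        using Bs_upper'[OF ks] s b0 by (intro frac_le) auto
    qed (use s b0 phi_nonneg in auto)
    finally show ?thesis by (simp add: field_simps)
  qed
  then show "0 \<le> psi s (Bs \<alpha> n ks) \<and> psi s (Bs \<alpha> n ks) \<le> exp (RR T + 1) / \<delta> * (real k + 1) * (T / RR T) powr (cm \<alpha> n * real k)"
    using psi_nonneg[OF b0] by simp
qed (use s in simp)

lemma chi_sum_bound:
  assumes t: "t > 0" and a: "a \<le> 1"
    and ba: "\<And>ks. ks \<in> Theta k n \<Longrightarrow> Bs \<alpha> n ks \<noteq> 0 \<Longrightarrow> a \<le> Bs \<alpha> n ks"
  shows "lam^k * (\<Sum>ks\<in>Theta k n. chi a t (Bs \<alpha> n ks)) \<le> exp (RR t + 1) * (RR t / t) * (1/2)^k"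
proof (rule geo_bound[OF t])
  fix ks assume ks: "ks \<in> Theta k n"
  have TR: "t / RR t \<le> 1" "t / RR t > 0" using RR_ge[OF t] RR_pos[OF t] t by auto
  have "chi a t (Bs \<alpha> n ks) \<le> exp (RR t + 1) * (RR t / t) * (real k + 1) * (t / RR t) powr (cm \<alpha> n * real k)"
  proof (cases "Bs \<alpha> n ks = 0")
    case True then show ?thesis using t RR_pos[OF t] by (simp add: chi_def)
  next
    case False
    have d0: "Bs \<alpha> n ks - a \<ge> 0" using ba[OF ks False] by simp
    have "chi a t (Bs \<alpha> n ks) = phi t (Bs \<alpha> n ks - a)"
      using False t by (simp add: chi_def phi_def tpow_def add_diff_eq)
    also have "\<dots> \<le> exp (RR t + 1) * (t / RR t) powr (Bs \<alpha> n ks - a)"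
      using phi_bound[of t t "RR t"] t RR_ge[OF t] d0 by auto
    also have "\<dots> \<le> exp (RR t + 1) * (t / RR t) powr (cm \<alpha> n * real k - 1)"
      using Bs_lower'[OF ks] TR a by (intro mult_left_mono powr_mono') auto
    also have "\<dots> = exp (RR t + 1) * (RR t / t) * (t / RR t) powr (cm \<alpha> n * real k)"
      using TR t RR_pos[OF t] by (simp add: powr_diff field_simps)
    also have "\<dots> \<le> exp (RR t + 1) * (RR t / t) * (real k + 1) * (t / RR t) powr (cm \<alpha> n * real k)"
    proof (rule mult_right_mono)
      have "exp (RR t + 1) * (RR t / t) * 1 \<le> exp (RR t + 1) * (RR t / t) * (real k + 1)"
        using t RR_pos[OF t] by (intro mult_left_mono) auto
      then show "exp (RR t + 1) * (RR t / t) \<le> exp (RR t + 1) * (RR t / t) * (real k + 1)" by simp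
    qed simp
    finally show ?thesis .
  qed
  moreover have "chi a t (Bs \<alpha> n ks) \<ge> 0"
    using ba[OF ks] by (cases "Bs \<alpha> n ks = 0") (auto simp: chi_def intro!: chi_nonneg)
  ultimately show "0 \<le> chi a t (Bs \<alpha> n ks) \<and> chi a t (Bs \<alpha> n ks) \<le> exp (RR t + 1) * (RR t / t) * (real k + 1) * (t / RR t) powr (cm \<alpha> n * real k)"
    by simp
qed (use t RR_pos[OF t] in simp)

end

lemma phi_deriv:
  assumes s: "s > 0" and b: "b \<ge> 0"
  shows "((\<lambda>s. phi s b) has_real_derivative psi s b) (at s)"
proof (cases "b = 0")
  case True
  then show ?thesis by (simp add: phi_def tpow_def psi_def)
next
  case False
  then have bp: "b > 0" using b by simp
  have e: "(\<lambda>s. phi s b) = (\<lambda>s. s powr b / Gamma (1 + b))"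
    using False by (simp add: phi_def tpow_def)
  have "((\<lambda>s. s powr b / Gamma (1 + b)) has_real_derivative (b * s powr (b - 1)) / Gamma (1 + b)) (at s)"
    by (intro DERIV_cdivide has_real_derivative_powr s)
  moreover have "(b * s powr (b - 1)) / Gamma (1 + b) = psi s b"
    using psi_eq[OF bp s] s by (simp add: phi_def tpow_def False powr_diff)
  ultimately show ?thesis using e by simp
qed

lemma phi_cont: "b \<ge> 0 \<Longrightarrow> continuous_on {0..T} (\<lambda>s. phi s b)"
proof (cases "b = 0")
  case True then show ?thesis by (simp add: phi_def tpow_def)
next
  case False
  assume "b \<ge> 0"
  then have bp: "b > 0" using False by simp
  have e: "(\<lambda>s. phi s b) = (\<lambda>s. s powr b / Gamma (1 + b))"
    using False by (simp add: phi_def tpow_def)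
  have "Gamma (1 + b) > 0" using bp by (intro Gamma_real_pos) simp
  then show ?thesis unfolding e using bp
    by (intro continuous_on_divide continuous_on_powr' continuous_on_id continuous_on_const) force+
qed

definition FF :: "real \<Rightarrow> (nat \<Rightarrow> real) \<Rightarrow> nat \<Rightarrow> nat \<Rightarrow> real \<Rightarrow> real" where
  "FF lam \<alpha> n k s = (-lam)^k * (\<Sum>ks\<in>Theta k n. phi s (Bs \<alpha> n ks))"
definition FD :: "real \<Rightarrow> (nat \<Rightarrow> real) \<Rightarrow> nat \<Rightarrow> nat \<Rightarrow> real \<Rightarrow> real" where
  "FD lam \<alpha> n k s = (-lam)^k * (\<Sum>ks\<in>Theta k n. psi s (Bs \<alpha> n ks))"
definition FC :: "real \<Rightarrow> (nat \<Rightarrow> real) \<Rightarrow> nat \<Rightarrow> real \<Rightarrow> nat \<Rightarrow> real \<Rightarrow> real" where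
  "FC lam \<alpha> n a k s = (-lam)^k * (\<Sum>ks\<in>Theta k n. chi a s (Bs \<alpha> n ks))"

context
  fixes lam :: real and \<alpha> :: "nat \<Rightarrow> real" and n :: nat
  assumes lam: "lam > 0" and \<alpha>: "\<And>j. 0 < \<alpha> j \<and> \<alpha> j \<le> 1"
begin


lemma sum_phi_nonneg: "(\<Sum>ks\<in>Theta k n. phi s (Bs \<alpha> n ks)) \<ge> 0"
  by (intro sum_nonneg phi_nonneg Bs_nonneg'[OF lam \<alpha>])
lemma sum_psi_nonneg: "(\<Sum>ks\<in>Theta k n. psi s (Bs \<alpha> n ks)) \<ge> 0"
  by (intro sum_nonneg psi_nonneg Bs_nonneg'[OF lam \<alpha>])

lemma FF_abs: "0 \<le> s \<Longrightarrow> s \<le> T \<Longrightarrow> 0 < T \<Longrightarrow> norm (FF lam \<alpha> n k s) \<le> exp (RR lam \<alpha> n T + 1) * (1/2)^k"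
  using phi_sum_bound[OF lam \<alpha>, where n=n and T=T and s=s and k=k] sum_phi_nonneg[where k=k and s=s] lam
  by (simp add: FF_def abs_mult power_abs)

lemma FD_abs: "0 < \<delta> \<Longrightarrow> \<delta> \<le> s \<Longrightarrow> s \<le> T \<Longrightarrow> 0 < T \<Longrightarrow> norm (FD lam \<alpha> n k s) \<le> exp (RR lam \<alpha> n T + 1) / \<delta> * (1/2)^k"
  using psi_sum_bound[OF lam \<alpha>, where n=n and T=T and \<delta>=\<delta> and s=s and k=k] sum_psi_nonneg[where k=k and s=s] lam
  by (simp add: FD_def abs_mult power_abs)

lemma summable_FF: assumes "0 \<le> s" shows "summable (\<lambda>k. FF lam \<alpha> n k s)"
proof (rule summable_comparison_test'[where g = "\<lambda>k. exp (RR lam \<alpha> n (s+1) + 1) * (1/2)^k" and N = 0])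
  show "summable (\<lambda>k. exp (RR lam \<alpha> n (s+1) + 1) * (1/2::real)^k)" by (intro summable_mult) simp
  fix k show "norm (FF lam \<alpha> n k s) \<le> exp (RR lam \<alpha> n (s+1) + 1) * (1/2)^k"
    by (rule FF_abs) (use assms in auto)
qed

lemma cont_FF_T: assumes T: "T > 0" shows "continuous_on {0..T} (\<lambda>s. \<Sum>k. FF lam \<alpha> n k s)"
proof (rule uniform_limit_theorem)
  show "uniform_limit {0..T} (\<lambda>N s. \<Sum>k<N. FF lam \<alpha> n k s) (\<lambda>s. \<Sum>k. FF lam \<alpha> n k s) sequentially"
  proof (rule Weierstrass_m_test[where M = "\<lambda>k. exp (RR lam \<alpha> n T + 1) * (1/2)^k"])
    show "summable (\<lambda>k. exp (RR lam \<alpha> n T + 1) * (1/2::real)^k)" by (intro summable_mult) simp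
    fix k s assume "s \<in> {0..T}"
    then show "norm (FF lam \<alpha> n k s) \<le> exp (RR lam \<alpha> n T + 1) * (1/2)^k"
      by (intro FF_abs) (use T in auto)
  qed
  show "\<forall>\<^sub>F N in sequentially. continuous_on {0..T} (\<lambda>s. \<Sum>k<N. FF lam \<alpha> n k s)"
    unfolding FF_def
    by (intro always_eventually allI continuous_intros phi_cont Bs_nonneg'[OF lam \<alpha>])
qed simp

lemma cont_FF: "continuous_on {0..} (\<lambda>s. \<Sum>k. FF lam \<alpha> n k s)"
  unfolding continuous_on_def
proof
  fix x :: real assume x: "x \<in> {0..}"
  have "continuous_on {0..x+1} (\<lambda>s. \<Sum>k. FF lam \<alpha> n k s)" using x by (intro cont_FF_T) auto
  then have "((\<lambda>s. \<Sum>k. FF lam \<alpha> n k s) \<longlongrightarrow> (\<Sum>k. FF lam \<alpha> n k x)) (at x within {0..x+1})"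
    using x unfolding continuous_on_def by auto
  moreover have "at x within {0..} = at x within {0..x+1}"
    by (rule at_within_nhd[where S = "{..<x+1}"]) auto
  ultimately show "((\<lambda>s. \<Sum>k. FF lam \<alpha> n k s) \<longlongrightarrow> (\<Sum>k. FF lam \<alpha> n k x)) (at x within {0..})" by simp
qed

lemma FF_deriv1: "s > 0 \<Longrightarrow> (FF lam \<alpha> n k has_real_derivative FD lam \<alpha> n k s) (at s)"
  unfolding FF_def[abs_def] FD_def
  by (intro DERIV_cmult DERIV_sum phi_deriv Bs_nonneg'[OF lam \<alpha>])

lemma deriv_FF:
  assumes s: "s > 0"
  shows "((\<lambda>s. \<Sum>k. FF lam \<alpha> n k s) has_real_derivative (\<Sum>k. FD lam \<alpha> n k s)) (at s)"
proof (rule has_field_derivative_series'(2)[where S = "{s/2..s+1}" and x0 = s])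
  show "convex {s/2..s+1}" by simp
  show "\<And>k x. x \<in> {s/2..s+1} \<Longrightarrow> (FF lam \<alpha> n k has_field_derivative FD lam \<alpha> n k x) (at x within {s/2..s+1})"
    using s by (intro DERIV_subset[OF FF_deriv1]) auto
  show "uniformly_convergent_on {s/2..s+1} (\<lambda>N x. \<Sum>k<N. FD lam \<alpha> n k x)"
  proof (rule Weierstrass_m_test'[where M = "\<lambda>k. exp (RR lam \<alpha> n (s+1) + 1) / (s/2) * (1/2)^k"])
    show "summable (\<lambda>k. exp (RR lam \<alpha> n (s+1) + 1) / (s/2) * (1/2::real)^k)" by (intro summable_mult) simp
    fix k x assume "x \<in> {s/2..s+1}"
    then show "norm (FD lam \<alpha> n k x) \<le> exp (RR lam \<alpha> n (s+1) + 1) / (s/2) * (1/2)^k"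
      by (intro FD_abs) (use s in auto)
  qed
  show "s \<in> {s/2..s+1}" using s by simp
  show "summable (\<lambda>k. FF lam \<alpha> n k s)" using s by (intro summable_FF) simp
  show "s \<in> interior {s/2..s+1}" using s by simp
qed

end

lemma beta_term:
  assumes t: "t > 0" and a: "0 < a" "a < 1" and b: "b > 0"
  shows "((\<lambda>s. (t - s) powr (- a) * psi s b) has_integral Gamma (1 - a) * chi a t b) {0..t}"
proof -
  define f where "f u = u powr (b - 1) * (1 - u) powr ((1 - a) - 1)" for u :: real
  have B: "(f has_integral Beta b (1 - a)) {0..1}"
    unfolding f_def[abs_def] using has_integral_Beta_real[of b "1 - a"] a b by simp
  have img: "(\<lambda>x. x / (1/t)) ` {0..1} = {0..t}"
  proof
    show "(\<lambda>x. x / (1/t)) ` {0..1} \<subseteq> {0..t}" using t by (auto simp: mult_le_cancel_left1)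
    show "{0..t} \<subseteq> (\<lambda>x. x / (1/t)) ` {0..1}"
    proof
      fix y assume y: "y \<in> {0..t}"
      have "y = (y / t) / (1/t)" using t by simp
      moreover have "y / t \<in> {0..1}" using y t by auto
      ultimately show "y \<in> (\<lambda>x. x / (1/t)) ` {0..1}" by blast
    qed
  qed
  have S: "((\<lambda>x. f ((1/t) * x)) has_integral (1 / \<bar>1/t\<bar>) *\<^sub>R Beta b (1 - a)) {0..t}"
    using has_integral_stretch_real[OF B, of "1/t"] t img by simp
  define C where "C = t powr (b - 1 - a) / Gamma b"
  have S2: "((\<lambda>x. C * f ((1/t) * x)) has_integral C * ((1 / \<bar>1/t\<bar>) *\<^sub>R Beta b (1 - a))) {0..t}"
    by (rule has_integral_mult_right[OF S])
  have eq: "C * f ((1/t) * s) = (t - s) powr (- a) * psi s b" if s: "s \<in> {0..t}" for s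
  proof -
    have "f ((1/t) * s) = (s powr (b - 1) / t powr (b - 1)) * ((t - s) powr (- a) / t powr (- a))"
    proof -
      have "1 - s / t = (t - s) / t" using t by (simp add: field_simps)
      then show ?thesis unfolding f_def using s t by (simp add: powr_divide)
    qed
    moreover have "t powr (b - 1 - a) = t powr (b - 1) * t powr (- a)"
      by (simp add: powr_add[symmetric])
    ultimately show ?thesis unfolding C_def psi_def using b t by (simp add: field_simps)
  qed
  have val: "C * ((1 / \<bar>1/t\<bar>) *\<^sub>R Beta b (1 - a)) = Gamma (1 - a) * chi a t b"
  proof -
    have g: "Gamma b > 0" "Gamma (1 - a) > 0" "Gamma (1 + b - a) > 0" using a b by auto
    have "t powr (b - 1 - a) * t = t powr (b - a)"
      using t powr_add[of t "b - 1 - a" 1] by simp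
    moreover have "b + (1 - a) = 1 + b - a" by simp
    moreover have gb: "Gamma b \<noteq> 0" using g(1) by simp
    ultimately show ?thesis unfolding C_def chi_def Beta_def using b t g gb
      by (simp add: field_simps)
  qed
  show ?thesis using has_integral_eq[OF eq S2] val by simp
qed

lemma term_int:
  assumes t: "t > 0" and a: "0 < a" "a < 1" and b: "b \<ge> 0"
  shows "((\<lambda>s. (t - s) powr (- a) * psi s b) has_integral Gamma (1 - a) * chi a t b) {0..t}"
proof (cases "b = 0")
  case True then show ?thesis by (simp add: psi_def chi_def)
next
  case False then show ?thesis using beta_term[OF t a] b by simp
qed

definition PS :: "real \<Rightarrow> (nat \<Rightarrow> real) \<Rightarrow> nat \<Rightarrow> nat \<Rightarrow> real \<Rightarrow> real" where
  "PS lam \<alpha> n k s = lam^k * (\<Sum>ks\<in>Theta k n. psi s (Bs \<alpha> n ks))"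
definition CS :: "real \<Rightarrow> (nat \<Rightarrow> real) \<Rightarrow> nat \<Rightarrow> real \<Rightarrow> nat \<Rightarrow> real \<Rightarrow> real" where
  "CS lam \<alpha> n a k t = lam^k * (\<Sum>ks\<in>Theta k n. chi a t (Bs \<alpha> n ks))"

context
  fixes lam :: real and \<alpha> :: "nat \<Rightarrow> real" and n :: nat
  assumes lam: "lam > 0" and \<alpha>: "\<And>j. 0 < \<alpha> j \<and> \<alpha> j \<le> 1"
begin

lemma sum_term_int:
  assumes t: "t > 0" and a: "0 < a" "a < 1"
  shows "((\<lambda>s. (t - s) powr (- a) * (c * (\<Sum>ks\<in>Theta k n. psi s (Bs \<alpha> n ks))))
     has_integral Gamma (1 - a) * (c * (\<Sum>ks\<in>Theta k n. chi a t (Bs \<alpha> n ks)))) {0..t}"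
proof -
  have "((\<lambda>s. \<Sum>ks\<in>Theta k n. c * ((t - s) powr (- a) * psi s (Bs \<alpha> n ks)))
     has_integral (\<Sum>ks\<in>Theta k n. c * (Gamma (1 - a) * chi a t (Bs \<alpha> n ks)))) {0..t}"
    by (intro has_integral_sum finite_Theta has_integral_mult_right term_int t a Bs_nonneg'[where lam=lam and \<alpha>=\<alpha> and n=n, OF lam \<alpha>])
  then show ?thesis by (simp add: sum_distrib_left mult_ac)
qed


lemma PS_nonneg: "PS lam \<alpha> n k s \<ge> 0"
  unfolding PS_def using lam by (intro mult_nonneg_nonneg sum_psi_nonneg[where lam=lam and \<alpha>=\<alpha> and n=n, OF lam \<alpha>]) auto

lemma FD_abs_PS: "norm (FD lam \<alpha> n k s) = PS lam \<alpha> n k s"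
  unfolding FD_def PS_def using lam sum_psi_nonneg[where lam=lam and \<alpha>=\<alpha> and n=n, OF lam \<alpha>, where k=k and s=s]
  by (simp add: abs_mult power_abs)

lemma PS_zero: "PS lam \<alpha> n k 0 = 0"
  unfolding PS_def psi_def by (simp add: sum.neutral)

lemma summable_PS: assumes "s \<ge> 0" shows "summable (\<lambda>k. PS lam \<alpha> n k s)"
proof (cases "s = 0")
  case True then show ?thesis by (simp add: PS_zero)
next
  case False
  then have s: "s > 0" using assms by simp
  show ?thesis
  proof (rule summable_comparison_test'[where g = "\<lambda>k. exp (RR lam \<alpha> n s + 1) / s * (1/2)^k" and N = 0])
    show "summable (\<lambda>k. exp (RR lam \<alpha> n s + 1) / s * (1/2::real)^k)" by (intro summable_mult) simp
    fix k show "norm (PS lam \<alpha> n k s) \<le> exp (RR lam \<alpha> n s + 1) / s * (1/2)^k"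
      using FD_abs[where lam=lam and \<alpha>=\<alpha> and n=n, OF lam \<alpha>, where \<delta>=s and s=s and T=s and k=k] s FD_abs_PS
      by (simp add: PS_nonneg)
  qed
qed

lemma summable_FD: "s \<ge> 0 \<Longrightarrow> summable (\<lambda>k. FD lam \<alpha> n k s)"
  by (rule summable_comparison_test'[OF summable_PS, where N = 0]) (auto simp: FD_abs_PS[symmetric])

context
  fixes a t :: real
  assumes t: "t > 0" and a: "0 < a" "a < 1"
    and ba: "\<And>k ks. ks \<in> Theta k n \<Longrightarrow> Bs \<alpha> n ks \<noteq> 0 \<Longrightarrow> a \<le> Bs \<alpha> n ks"
begin

lemma chi_sum_nonneg: "(\<Sum>ks\<in>Theta k n. chi a t (Bs \<alpha> n ks)) \<ge> 0"
proof (intro sum_nonneg)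
  fix ks assume "ks \<in> Theta k n"
  then show "chi a t (Bs \<alpha> n ks) \<ge> 0"
    using ba[of ks k] by (cases "Bs \<alpha> n ks = 0") (auto simp: chi_def intro!: chi_nonneg)
qed

lemma CS_nonneg: "CS lam \<alpha> n a k t \<ge> 0"
  unfolding CS_def using lam chi_sum_nonneg by simp

lemma FC_abs: "norm (FC lam \<alpha> n a k t) = CS lam \<alpha> n a k t"
  unfolding FC_def CS_def using lam chi_sum_nonneg[of k] by (simp add: abs_mult power_abs)

lemma summable_CS: "summable (\<lambda>k. CS lam \<alpha> n a k t)"
proof (rule summable_comparison_test'[where g = "\<lambda>k. exp (RR lam \<alpha> n t + 1) * (RR lam \<alpha> n t / t) * (1/2)^k" and N = 0])
  show "summable (\<lambda>k. exp (RR lam \<alpha> n t + 1) * (RR lam \<alpha> n t / t) * (1/2::real)^k)" by (intro summable_mult) simp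
  fix k show "norm (CS lam \<alpha> n a k t) \<le> exp (RR lam \<alpha> n t + 1) * (RR lam \<alpha> n t / t) * (1/2)^k"
    using chi_sum_bound[where lam=lam and \<alpha>=\<alpha> and n=n, OF lam \<alpha>, where t=t and a=a and k=k] t a ba CS_nonneg
    by (simp add: CS_def)
qed

lemma summable_FC: "summable (\<lambda>k. FC lam \<alpha> n a k t)"
  by (rule summable_comparison_test'[OF summable_CS, where N = 0]) (auto simp: FC_abs[symmetric])

lemma int_FD:
  shows "((\<lambda>s. (t - s) powr (- a) * (\<Sum>k. FD lam \<alpha> n k s)) has_integral
           Gamma (1 - a) * (\<Sum>k. FC lam \<alpha> n a k t)) {0..t}"
proof -
  define w where "w s = (t - s) powr (- a)" for s :: real
  have w0: "w s \<ge> 0" for s unfolding w_def by simp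
  have intH: "((\<lambda>s. w s * (\<Sum>k<N. PS lam \<alpha> n k s)) has_integral Gamma (1 - a) * (\<Sum>k<N. CS lam \<alpha> n a k t)) {0..t}" for N
  proof -
    have "((\<lambda>s. \<Sum>k<N. w s * PS lam \<alpha> n k s) has_integral (\<Sum>k<N. Gamma (1 - a) * CS lam \<alpha> n a k t)) {0..t}"
      unfolding w_def PS_def CS_def by (intro has_integral_sum sum_term_int t a) auto
    then show ?thesis by (simp add: sum_distrib_left)
  qed
  have intF: "((\<lambda>s. w s * (\<Sum>k<N. FD lam \<alpha> n k s)) has_integral Gamma (1 - a) * (\<Sum>k<N. FC lam \<alpha> n a k t)) {0..t}" for N
  proof -
    have "((\<lambda>s. \<Sum>k<N. w s * FD lam \<alpha> n k s) has_integral (\<Sum>k<N. Gamma (1 - a) * FC lam \<alpha> n a k t)) {0..t}"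
      unfolding w_def FD_def FC_def by (intro has_integral_sum sum_term_int t a) auto
    then show ?thesis by (simp add: sum_distrib_left)
  qed
  define G where "G s = w s * (\<Sum>k. PS lam \<alpha> n k s)" for s
  have mono: "G integrable_on {0..t} \<and>
     ((\<lambda>N. integral {0..t} (\<lambda>s. w s * (\<Sum>k<N. PS lam \<alpha> n k s))) \<longlongrightarrow> integral {0..t} G) sequentially"
  proof (rule monotone_convergence_increasing)
    show "(\<lambda>s. w s * (\<Sum>k<N. PS lam \<alpha> n k s)) integrable_on {0..t}" for N using intH by blast
    show "w s * (\<Sum>k<N. PS lam \<alpha> n k s) \<le> w s * (\<Sum>k<Suc N. PS lam \<alpha> n k s)" for N s
      using w0 PS_nonneg by (intro mult_left_mono) auto
    show "((\<lambda>N. w s * (\<Sum>k<N. PS lam \<alpha> n k s)) \<longlongrightarrow> G s) sequentially" if "s \<in> {0..t}" for s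
      unfolding G_def using that by (intro tendsto_mult_left summable_LIMSEQ summable_PS) auto
    show "bounded (range (\<lambda>N. integral {0..t} (\<lambda>s. w s * (\<Sum>k<N. PS lam \<alpha> n k s))))"
      unfolding bounded_iff
    proof (intro exI ballI)
      fix x assume "x \<in> range (\<lambda>N. integral {0..t} (\<lambda>s. w s * (\<Sum>k<N. PS lam \<alpha> n k s)))"
      then obtain N where x: "x = Gamma (1 - a) * (\<Sum>k<N. CS lam \<alpha> n a k t)"
        using intH by (auto simp: integral_unique)
      have g: "Gamma (1 - a) > 0" using a by simp
      have "(\<Sum>k<N. CS lam \<alpha> n a k t) \<le> (\<Sum>k. CS lam \<alpha> n a k t)"
        by (intro sum_le_suminf summable_CS CS_nonneg) auto
      moreover have "(\<Sum>k<N. CS lam \<alpha> n a k t) \<ge> 0" by (intro sum_nonneg CS_nonneg)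
      ultimately show "norm x \<le> Gamma (1 - a) * (\<Sum>k. CS lam \<alpha> n a k t)"
        using x g by (simp add: abs_mult)
    qed
  qed
  have fi: "(\<lambda>s. w s * (\<Sum>k<N. FD lam \<alpha> n k s)) integrable_on {0..t}" for N using intF by blast
  have hi: "G integrable_on {0..t}" using mono by blast
  have le: "norm (w s * (\<Sum>k<N. FD lam \<alpha> n k s)) \<le> G s" if "s \<in> {0..t}" for N s
  proof -
    have "norm (w s * (\<Sum>k<N. FD lam \<alpha> n k s)) = w s * norm (\<Sum>k<N. FD lam \<alpha> n k s)"
      using w0[of s] by (simp add: abs_mult)
    also have "\<dots> \<le> w s * (\<Sum>k<N. PS lam \<alpha> n k s)"
    proof (rule mult_left_mono[OF _ w0])
      have "norm (\<Sum>k<N. FD lam \<alpha> n k s) \<le> (\<Sum>k<N. norm (FD lam \<alpha> n k s))" by (rule norm_sum)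
      also have "\<dots> = (\<Sum>k<N. PS lam \<alpha> n k s)" by (simp only: FD_abs_PS)
      finally show "norm (\<Sum>k<N. FD lam \<alpha> n k s) \<le> (\<Sum>k<N. PS lam \<alpha> n k s)" .
    qed
    also have "\<dots> \<le> G s" unfolding G_def
    proof (rule mult_left_mono[OF _ w0])
      show "(\<Sum>k<N. PS lam \<alpha> n k s) \<le> (\<Sum>k. PS lam \<alpha> n k s)"
        using that by (intro sum_le_suminf summable_PS PS_nonneg) auto
    qed
    finally show ?thesis .
  qed
  have conv: "(\<lambda>N. w s * (\<Sum>k<N. FD lam \<alpha> n k s)) \<longlonglongrightarrow> w s * (\<Sum>k. FD lam \<alpha> n k s)" if "s \<in> {0..t}" for s
    using that by (intro tendsto_mult_left summable_LIMSEQ summable_FD) auto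
  note dc = dominated_convergence[of "\<lambda>N s. w s * (\<Sum>k<N. FD lam \<alpha> n k s)" "{0..t}" G
              "\<lambda>s. w s * (\<Sum>k. FD lam \<alpha> n k s)", OF fi hi le conv]
  have lim2: "(\<lambda>N. integral {0..t} (\<lambda>s. w s * (\<Sum>k<N. FD lam \<alpha> n k s))) \<longlonglongrightarrow> Gamma (1 - a) * (\<Sum>k. FC lam \<alpha> n a k t)"
  proof -
    have ie: "integral {0..t} (\<lambda>s. w s * (\<Sum>k<N. FD lam \<alpha> n k s)) = Gamma (1 - a) * (\<Sum>k<N. FC lam \<alpha> n a k t)" for N
      using intF[of N] by (rule integral_unique)
    show ?thesis unfolding ie by (intro tendsto_mult_left summable_LIMSEQ summable_FC)
  qed
  have "integral {0..t} (\<lambda>s. w s * (\<Sum>k. FD lam \<alpha> n k s)) = Gamma (1 - a) * (\<Sum>k. FC lam \<alpha> n a k t)"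
    using dc(2) lim2 LIMSEQ_unique by blast
  then show ?thesis using dc(1) unfolding w_def by (metis integrable_integral)
qed

end
end

lemma atMost_split: "(\<Sum>j\<le>(n::nat). g j) = g n + (\<Sum>j<n. (g j :: 'a::comm_monoid_add))"
proof -
  have "{..n} = insert n {..<n}" by auto
  then show ?thesis by simp
qed

lemma sum_upd_nat: "(\<Sum>j\<le>(n::nat). (f(n := v)) j) = (\<Sum>j<n. f j) + (v::nat)"
proof -
  have "(\<Sum>j\<le>n. (f(n:=v)) j) = (f(n:=v)) n + (\<Sum>j<n. (f(n:=v)) j)" by (rule atMost_split[of "f(n:=v)" n])
  also have "(\<Sum>j<n. (f(n:=v)) j) = (\<Sum>j<n. f j)" by (intro sum.cong) auto
  finally show ?thesis by simp
qed

lemma Theta_upd: "ks(n := v) \<in> Theta k n \<longleftrightarrow>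
   (\<forall>j>n. ks j = 0) \<and> (\<Sum>j<n. ks j) + v = k \<and> (\<forall>j\<in>{1..<n}. ks j \<ge> 1) \<and> (n \<ge> 1 \<longrightarrow> v \<ge> 1)"
proof -
  have "(\<forall>j\<in>{1..n}. (ks(n := v)) j \<ge> 1) \<longleftrightarrow> (\<forall>j\<in>{1..<n}. ks j \<ge> 1) \<and> (n \<ge> 1 \<longrightarrow> v \<ge> 1)"
    by (auto simp: Ball_def)
  moreover have "(\<forall>j>n. (ks(n := v)) j = 0) \<longleftrightarrow> (\<forall>j>n. ks j = 0)" by auto
  moreover have "(\<Sum>j\<le>n. (ks(n:=v)) j) = (\<Sum>j<n. ks j) + v" by (rule sum_upd_nat)
  ultimately show ?thesis unfolding Theta_def mem_Collect_eq by (simp only:)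
qed

lemma Theta_mem2: "ks \<in> Theta k n \<longleftrightarrow>
   (\<forall>j>n. ks j = 0) \<and> (\<Sum>j<n. ks j) + ks n = k \<and> (\<forall>j\<in>{1..<n}. ks j \<ge> 1) \<and> (n \<ge> 1 \<longrightarrow> ks n \<ge> 1)"
  using Theta_upd[of ks n "ks n" k] by simp

lemma Bs_upd: "Bs \<alpha> n (f(n := v)) = Bs \<alpha> n f + (real v - real (f n)) * \<alpha> n"
proof -
  have "(\<Sum>j<n. real ((f(n := v)) j) * \<alpha> j) = (\<Sum>j<n. real (f j) * \<alpha> j)" by (intro sum.cong) auto
  then show ?thesis unfolding Bs_def by (simp add: atMost_split algebra_simps)
qed

lemma Bs_Suc: "f (Suc m) = 0 \<Longrightarrow> Bs \<alpha> (Suc m) f = Bs \<alpha> m f"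
  unfolding Bs_def by simp

lemma tpow_pos: "t > 0 \<Longrightarrow> tpow t b = t powr b"
  unfolding tpow_def by simp

lemma chi_phi:
  assumes t: "t > 0" and b: "b \<noteq> 0" "b' = b - a"
  shows "chi a t b = phi t b'"
  using assms by (simp add: chi_def phi_def tpow_pos add_diff_eq)

lemma Theta_mem: "ks \<in> Theta k n \<longleftrightarrow> (\<forall>j>n. ks j = 0) \<and> (\<Sum>j\<le>n. ks j) = k \<and> (\<forall>j\<in>{1..n}. ks j \<ge> 1)"
  unfolding Theta_def by simp

context
  fixes lam :: real and \<alpha> :: "nat \<Rightarrow> real"
  assumes lam: "lam > 0" and \<alpha>: "\<And>j. 0 < \<alpha> j \<and> \<alpha> j \<le> 1"
begin

lemma comb_step:
  assumes t: "t > 0"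
  shows "(\<Sum>ks\<in>Theta (Suc k) n. chi (\<alpha> n) t (Bs \<alpha> n ks)) =
    (\<Sum>ks\<in>Theta k n. phi t (Bs \<alpha> n ks)) +
    (if n = 0 then 0 else (\<Sum>ks\<in>Theta k (n - 1). phi t (Bs \<alpha> (n - 1) ks)))"
proof -
  define dec where "dec ks = ks(n := ks n - 1)" for ks :: "nat \<Rightarrow> nat"
  define inc where "inc ks = ks(n := ks n + 1)" for ks :: "nat \<Rightarrow> nat"
  have nz: "Bs \<alpha> n ks \<noteq> 0" if "ks \<in> Theta (Suc k) n" for ks
    using Bs_zero'[where lam=lam and \<alpha>=\<alpha> and n=n, OF lam \<alpha> that] by simp
  have chi_dec: "chi (\<alpha> n) t (Bs \<alpha> n ks) = phi t (Bs \<alpha> n (dec ks))"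
    if "ks \<in> Theta (Suc k) n" "ks n \<ge> 1" for ks
  proof (rule chi_phi[OF t nz[OF that(1)]])
    show "Bs \<alpha> n (dec ks) = Bs \<alpha> n ks - \<alpha> n"
      unfolding dec_def Bs_upd using that(2) by (simp add: of_nat_diff algebra_simps)
  qed
  have A: "(\<Sum>ks\<in>Theta (Suc k) n \<inter> {ks. n = 0 \<or> ks n \<ge> 2}. chi (\<alpha> n) t (Bs \<alpha> n ks)) =
      (\<Sum>ks\<in>Theta k n. phi t (Bs \<alpha> n ks))"
  proof (rule sum.reindex_bij_witness[where j = dec and i = inc])
    fix ks assume ks: "ks \<in> Theta (Suc k) n \<inter> {ks. n = 0 \<or> ks n \<ge> 2}"
    have kn: "ks n \<ge> 1" using ks by (auto simp: Theta_mem2)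
    show "inc (dec ks) = ks" using kn by (auto simp: inc_def dec_def)
    from kn show "phi t (Bs \<alpha> n (dec ks)) = chi (\<alpha> n) t (Bs \<alpha> n ks)" using ks by (intro chi_dec[symmetric]) auto
    have "ks(n := ks n - 1) \<in> Theta k n" unfolding Theta_upd using ks by (auto simp: Theta_mem2)
    then show "dec ks \<in> Theta k n"
      using ks unfolding dec_def by auto
  next
    fix ks assume ks: "ks \<in> Theta k n"
    show "dec (inc ks) = ks" using ks by (auto simp: inc_def dec_def)
    have "ks(n := ks n + 1) \<in> Theta (Suc k) n" unfolding Theta_upd using ks by (auto simp: Theta_mem2)
    moreover have "n = 0 \<or> ks n \<ge> 1" using ks by (auto simp: Theta_mem2)
    ultimately show "inc ks \<in> Theta (Suc k) n \<inter> {ks. n = 0 \<or> ks n \<ge> 2}"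
      unfolding inc_def by auto
  qed
  have B: "(\<Sum>ks\<in>Theta (Suc k) n - {ks. n = 0 \<or> ks n \<ge> 2}. chi (\<alpha> n) t (Bs \<alpha> n ks)) =
      (if n = 0 then 0 else (\<Sum>ks\<in>Theta k (n - 1). phi t (Bs \<alpha> (n - 1) ks)))"
  proof (cases n)
    case 0 then show ?thesis by simp
  next
    case (Suc m)
    have "(\<Sum>ks\<in>Theta (Suc k) (Suc m) - {ks. Suc m = 0 \<or> ks (Suc m) \<ge> 2}. chi (\<alpha> (Suc m)) t (Bs \<alpha> (Suc m) ks)) =
      (\<Sum>ks\<in>Theta k m. phi t (Bs \<alpha> m ks))"
    proof (rule sum.reindex_bij_witness[where j = "\<lambda>ks. ks(Suc m := 0)" and i = "\<lambda>ks. ks(Suc m := 1)"])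
      fix ks assume ks: "ks \<in> Theta (Suc k) (Suc m) - {ks. Suc m = 0 \<or> ks (Suc m) \<ge> 2}"
      have k1: "ks (Suc m) = 1" using ks by (auto simp: Theta_mem2)
      have sm: "(\<Sum>j<Suc m. ks j) = k" using ks k1 by (auto simp: Theta_mem2)
      show "ks(Suc m := 0, Suc m := 1) = ks" using k1 by auto
      have "(\<Sum>j\<le>m. (ks(Suc m := 0)) j) = (\<Sum>j\<le>m. ks j)" by (intro sum.cong) auto
      also have "\<dots> = k" using sm by (simp add: lessThan_Suc_atMost)
      finally show "ks(Suc m := 0) \<in> Theta k m"
        using ks unfolding Theta_def by auto
      have "Bs \<alpha> m (ks(Suc m := 0)) = Bs \<alpha> (Suc m) (ks(Suc m := 0))" by (rule Bs_Suc[symmetric]) simp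
      also have "\<dots> = Bs \<alpha> (Suc m) ks - \<alpha> (Suc m)" unfolding Bs_upd using k1 by simp
      finally show "phi t (Bs \<alpha> m (ks(Suc m := 0))) = chi (\<alpha> (Suc m)) t (Bs \<alpha> (Suc m) ks)"
        using chi_phi[OF t nz] ks Suc by auto
    next
      fix ks assume ks: "ks \<in> Theta k m"
      have z: "ks (Suc m) = 0" using ks by (auto simp: Theta_def)
      show "ks(Suc m := 1, Suc m := 0) = ks" using z by auto
      have "ks(Suc m := 1) \<in> Theta (Suc k) (Suc m)" unfolding Theta_upd using ks
        by (auto simp: Theta_def lessThan_Suc_atMost)
      then show "ks(Suc m := 1) \<in> Theta (Suc k) (Suc m) - {ks. Suc m = 0 \<or> ks (Suc m) \<ge> 2}" by auto
    qed
    then show ?thesis using Suc by simp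
  qed
  have "(\<Sum>ks\<in>Theta (Suc k) n. chi (\<alpha> n) t (Bs \<alpha> n ks)) =
    (\<Sum>ks\<in>Theta (Suc k) n \<inter> {ks. n = 0 \<or> ks n \<ge> 2}. chi (\<alpha> n) t (Bs \<alpha> n ks)) +
    (\<Sum>ks\<in>Theta (Suc k) n - {ks. n = 0 \<or> ks n \<ge> 2}. chi (\<alpha> n) t (Bs \<alpha> n ks))"
    by (rule sum.Int_Diff[OF finite_Theta])
  then show ?thesis using A B by simp
qed

lemma FC_0: "FC lam \<alpha> n a 0 t = 0"
proof -
  have "chi a t (Bs \<alpha> n ks) = 0" if "ks \<in> Theta 0 n" for ks
    using Bs_zero'[where lam=lam and \<alpha>=\<alpha> and n=n, OF lam \<alpha> that] by (simp add: chi_def)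
  then show ?thesis unfolding FC_def by simp
qed

lemma FC_Suc: assumes t: "t > 0"
  shows "FC lam \<alpha> n (\<alpha> n) (Suc k) t = - lam * (FF lam \<alpha> n k t + (if n = 0 then 0 else FF lam \<alpha> (n - 1) k t))"
  unfolding FC_def FF_def comb_step[OF t] by (simp add: algebra_simps)

lemma FF_at0: "FF lam \<alpha> n k 0 = (if k = 0 \<and> n = 0 then 1 else 0)"
proof (cases "k = 0")
  case False
  have "phi 0 (Bs \<alpha> n ks) = 0" if "ks \<in> Theta k n" for ks
    using Bs_zero'[where lam=lam and \<alpha>=\<alpha> and n=n, OF lam \<alpha> that] False by (simp add: phi_def tpow_def)
  then show ?thesis unfolding FF_def using False by simp
next
  case True
  show ?thesis
  proof (cases "n = 0")
    case False then show ?thesis using True Theta_empty[of 0 n] by (simp add: FF_def)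
  next
    case n0: True
    have "Theta 0 0 = {(\<lambda>_. 0)}" unfolding Theta_def
      by (auto simp: fun_eq_iff) (metis neq0_conv)
    then show ?thesis using True n0 by (simp add: FF_def phi_def tpow_def Bs_def)
  qed
qed

end

lemma suminf_shift0:
  assumes "\<And>i. i < n \<Longrightarrow> f i = (0::real)"
  shows "suminf (\<lambda>k. f (k + n)) = suminf f"
proof -
  have "(\<lambda>s. (\<lambda>i. f (i + n)) sums s) = (\<lambda>s. f sums s)"
    using assms by (simp add: sums_iff_shift fun_eq_iff)
  then show ?thesis unfolding suminf_def by simp
qed

lemma ba_lemma:
  assumes \<alpha>: "\<And>j. 0 < \<alpha> j \<and> \<alpha> j \<le> 1"
    and ks: "ks \<in> Theta k n" and nz: "Bs \<alpha> n ks \<noteq> 0"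
  shows "\<alpha> n \<le> Bs \<alpha> n ks"
proof -
  have kn: "ks n \<ge> 1"
  proof (cases "n = 0")
    case True
    then have "Bs \<alpha> n ks = real (ks 0) * \<alpha> 0" by (simp add: Bs_def)
    then show ?thesis using nz True by (cases "ks 0") auto
  next
    case False then show ?thesis using ks by (auto simp: Theta_mem2)
  qed
  have "\<alpha> n \<le> real (ks n) * \<alpha> n" using kn \<alpha>[of n] by (simp add: mult_le_cancel_right1)
  also have "\<dots> \<le> Bs \<alpha> n ks" unfolding Bs_def
    using \<alpha> by (intro member_le_sum mult_nonneg_nonneg) (auto intro: less_imp_le)
  finally show ?thesis .
qed

theorem theorem3p2:
  fixes lam :: real and \<alpha> :: "nat \<Rightarrow> real"
  assumes "lam > 0"
    and "\<And>n. 0 < \<alpha> n \<and> \<alpha> n \<le> 1"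
  defines "p \<equiv> sdfpp lam \<alpha>"
  shows "(\<forall>n t. t \<ge> 0 \<longrightarrow> summable (\<lambda>k. sdfpp_term lam \<alpha> n t (k + n)))
    \<and> (\<forall>n. continuous_on {0..} (p n))
    \<and> p 0 0 = 1 \<and> (\<forall>n\<ge>1. p n 0 = 0)
    \<and> (\<forall>n t. t > 0 \<longrightarrow> caputo_defined (\<alpha> n) (p n) t \<and>
          caputo (\<alpha> n) (p n) t = - lam * (p n t - (if n = 0 then 0 else p (n - 1) t)))"
proof -
  have lam: "lam > 0" using assms(1) .
  have \<alpha>: "\<And>j. 0 < \<alpha> j \<and> \<alpha> j \<le> 1" using assms(2) .
  define P where "P n t = (\<Sum>k. FF lam \<alpha> n k t)" for n t
  have term_eq: "sdfpp_term lam \<alpha> n t k = FF lam \<alpha> n k t" for n t k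
    unfolding sdfpp_term_def FF_def phi_def Bs_def by simp
  have p_eq: "p n t = (-1)^n * P n t" for n t
  proof -
    have "(\<Sum>k. sdfpp_term lam \<alpha> n t (k+n)) = (\<Sum>k. FF lam \<alpha> n k t)"
    proof (unfold term_eq, rule suminf_shift0)
      fix i assume "i < n"
      then have "Theta i n = {}" by (rule Theta_empty)
      then show "FF lam \<alpha> n i t = 0" unfolding FF_def by simp
    qed
    then show ?thesis by (simp add: p_def sdfpp_def P_def)
  qed
  have p_fun: "p n = (\<lambda>t. (-1)^n * P n t)" for n using p_eq by auto
  have sumF: "summable (\<lambda>k. FF lam \<alpha> n k t)" if "t \<ge> 0" for n t
    using summable_FF[where lam=lam and \<alpha>=\<alpha> and n=n, OF lam \<alpha> that] .
  have P1: "\<forall>n t. t \<ge> 0 \<longrightarrow> summable (\<lambda>k. sdfpp_term lam \<alpha> n t (k + n))"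
  proof (intro allI impI)
    fix n t assume "(t::real) \<ge> 0"
    then have "summable (\<lambda>k. FF lam \<alpha> n k t)" by (rule sumF)
    then show "summable (\<lambda>k. sdfpp_term lam \<alpha> n t (k + n))"
      unfolding term_eq by (subst summable_iff_shift)
  qed
  have P2: "\<forall>n. continuous_on {0..} (p n)"
    unfolding p_fun P_def
    using cont_FF[where lam=lam and \<alpha>=\<alpha>, OF lam \<alpha>] by (intro allI continuous_intros) auto
  have F0: "FF lam \<alpha> n k 0 = (if k = 0 \<and> n = 0 then 1 else 0)" for n k
    using FF_at0[where lam=lam and \<alpha>=\<alpha>, OF lam \<alpha>] .
  have P0: "P n 0 = (if n = 0 then 1 else 0)" for n
  proof -
    have "P n 0 = (\<Sum>k\<in>{0}. FF lam \<alpha> n k 0)" unfolding P_def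
      by (rule suminf_finite) (auto simp: F0)
    then show ?thesis by (simp add: F0)
  qed
  have P3: "p 0 0 = 1" using p_eq P0 by simp
  have P4: "\<forall>n\<ge>1. p n 0 = 0" using p_eq P0 by simp
  have P5: "caputo_defined (\<alpha> n) (p n) t \<and>
          caputo (\<alpha> n) (p n) t = - lam * (p n t - (if n = 0 then 0 else p (n - 1) t))"
    if t: "t > 0" for n t
  proof -
    define a where "a = \<alpha> n"
    have D: "(p n has_real_derivative (-1)^n * (\<Sum>k. FD lam \<alpha> n k s)) (at s)" if "s > 0" for s
      unfolding p_fun P_def
      by (intro DERIV_cmult deriv_FF[where lam=lam and \<alpha>=\<alpha>, OF lam \<alpha> that])
    have Dd: "p n differentiable (at s)" if "s > 0" for s
      using D[OF that] unfolding has_field_derivative_def by (rule differentiableI)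
    have CF: "caputo_defined a (p n) t \<and> caputo a (p n) t = (-1)^n * (\<Sum>k. FC lam \<alpha> n a k t)"
    proof (cases "a = 1")
      case True
      have "FD lam \<alpha> n k t = FC lam \<alpha> n 1 k t" for k
        unfolding FD_def FC_def psi_def chi_def by (intro arg_cong[where f="\<lambda>x. (-lam)^k * x"] sum.cong) auto
      then have "caputo a (p n) t = (-1)^n * (\<Sum>k. FC lam \<alpha> n a k t)"
        using True DERIV_imp_deriv[OF D[OF t]] by (simp add: caputo_def)
      moreover have "caputo_defined a (p n) t" using True Dd[OF t] by (simp add: caputo_defined_def)
      ultimately show ?thesis by simp
    next
      case False
      have a0: "0 < a" "a < 1" using \<alpha>[of n] False by (auto simp: a_def)
      have ba: "a \<le> Bs \<alpha> n ks" if "ks \<in> Theta k n" "Bs \<alpha> n ks \<noteq> 0" for k ks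
        unfolding a_def by (rule ba_lemma[OF \<alpha> that])
      have I: "((\<lambda>s. (t - s) powr (- a) * (\<Sum>k. FD lam \<alpha> n k s)) has_integral
           Gamma (1 - a) * (\<Sum>k. FC lam \<alpha> n a k t)) {0..t}"
        by (rule int_FD[where lam=lam and \<alpha>=\<alpha> and n=n and a=a and t=t, OF lam \<alpha> t a0 ba])
      have I2: "((\<lambda>s. (t - s) powr (- a) * deriv (p n) s) has_integral
           (-1)^n * (Gamma (1 - a) * (\<Sum>k. FC lam \<alpha> n a k t))) {0..t}"
      proof (rule has_integral_spike[where S = "{0}", OF negligible_sing _ has_integral_mult_right[OF I]])
        fix s assume s: "s \<in> {0..t} - {0}"
        then have "s > 0" by auto
        then show "(t - s) powr (- a) * deriv (p n) s = (-1)^n * ((t - s) powr (- a) * (\<Sum>k. FD lam \<alpha> n k s))"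
          using DERIV_imp_deriv[OF D] by simp
      qed
      have g: "Gamma (1 - a) \<noteq> 0" using Gamma_real_pos[of "1 - a"] a0 by force
      have "caputo a (p n) t = (-1)^n * (\<Sum>k. FC lam \<alpha> n a k t)"
        using False integral_unique[OF I2] g by (simp add: caputo_def)
      moreover have "caputo_defined a (p n) t"
        using False Dd I2 by (auto simp: caputo_defined_def)
      ultimately show ?thesis by simp
    qed
    have S: "(\<lambda>k. FC lam \<alpha> n a k t) sums (- lam * (P n t + (if n = 0 then 0 else P (n - 1) t)))"
    proof -
      have "(\<lambda>k. FC lam \<alpha> n a (Suc k) t) sums (- lam * (P n t + (if n = 0 then 0 else P (n - 1) t)))"
      proof -
        have "(\<lambda>k. FF lam \<alpha> n k t + (if n = 0 then 0 else FF lam \<alpha> (n - 1) k t)) sums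
                (P n t + (if n = 0 then 0 else P (n - 1) t))"
          unfolding P_def using sumF t by (intro sums_add) (auto intro: summable_sums)
        from sums_mult[OF this, of "- lam"] show ?thesis
          unfolding a_def FC_Suc[where lam=lam and \<alpha>=\<alpha>, OF lam \<alpha> t] .
      qed
      then show ?thesis using sums_Suc_iff[of "\<lambda>k. FC lam \<alpha> n a k t"]
        FC_0[where lam=lam and \<alpha>=\<alpha>, OF lam \<alpha>, of n a t] by simp
    qed
    have sv: "(\<Sum>k. FC lam \<alpha> n a k t) = - lam * (P n t + (if n = 0 then 0 else P (n - 1) t))"
      using sums_unique[OF S] by simp
    have cap0: "caputo a (p n) t = (-1)^n * (- lam * (P n t + (if n = 0 then 0 else P (n - 1) t)))"
      using CF sv by simp
    have cap: "caputo (\<alpha> n) (p n) t = (-1)^n * (- lam * (P n t + (if n = 0 then 0 else P (n - 1) t)))"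
      using cap0 by (simp add: a_def)
    show ?thesis
    proof (cases n)
      case 0 then show ?thesis using CF cap p_eq by (simp add: a_def)
    next
      case (Suc m) then show ?thesis using CF cap p_eq by (simp add: a_def algebra_simps)
    qed
  qed
  show ?thesis using P1 P2 P3 P4 P5 by blast
qed

end
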